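(* Let $X$ be a Sturmian word and let $P$ be a palindrome that is maximal in $X$. Then $P$ also has a non-maximal occurrence in $X$ which is a proper factor of a same-centric maximal palindrome: there are positions $i'<i\le j<j'$ with $i'\ge 2$, $i+j=i'+j'$, $X[i..j]=P$, $X[i-1]=X[j+1]$, $X[i'..j']$ a palindrome, and $X[i'-1]\neq X[j'+1]$.
   Context: A Sturmian word is a right-infinite aperiodic word over $\{a,b\}$ with exactly $n+1$ factors of each length $n$. $X[i..j]$ denotes the factor of $X$ from position $i$ to position $j$. A palindrome is a word equal to its reverse. A palindrome $P$ is maximal in $X$ if $lPl'$ is a factor of $X$ for some letters $l\neq l'$. *)

theory Defs
  imports Main
begin

datatype letter = a | b

text \<open>Right-infinite words are functions nat => letter, positions start at 0.\<close>
type_synonym word = "nat \<Rightarrow> letter"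

definition fac :: "word \<Rightarrow> nat \<Rightarrow> nat \<Rightarrow> letter list" where
  "fac X i j = map X [i..<Suc j]"

definition is_factor :: "word \<Rightarrow> letter list \<Rightarrow> bool" where
  "is_factor X u \<longleftrightarrow> (\<exists>i. map (\<lambda>k. X (i + k)) [0..<length u] = u)"

definition factors_of_length :: "word \<Rightarrow> nat \<Rightarrow> letter list set" where
  "factors_of_length X n = {u. length u = n \<and> is_factor X u}"

definition eventually_periodic :: "word \<Rightarrow> bool" where
  "eventually_periodic X \<longleftrightarrow> (\<exists>p>0. \<exists>N. \<forall>n\<ge>N. X (n + p) = X n)"

definition sturmian :: "word \<Rightarrow> bool" where
  "sturmian X \<longleftrightarrow> \<not> eventually_periodic X \<and>
     (\<forall>n. card (factors_of_length X n) = n + 1)"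

definition palindrome :: "'a list \<Rightarrow> bool" where
  "palindrome u \<longleftrightarrow> rev u = u"

definition maximal_pal :: "word \<Rightarrow> letter list \<Rightarrow> bool" where
  "maximal_pal X P \<longleftrightarrow> (\<exists>l l'. l \<noteq> l' \<and> is_factor X (l # P @ [l']))"

end

theory Submission
  imports Defs
begin


lemma letter2: "(z::letter) = a \<or> z = b" by (cases z) auto
lemma letter_other: "(x::letter) \<noteq> y \<Longrightarrow> z = x \<or> z = y" by (cases x; cases y; cases z) auto

definition occ :: "word \<Rightarrow> letter list \<Rightarrow> nat \<Rightarrow> bool" where
  "occ Y u i \<longleftrightarrow> (\<forall>k<length u. Y (i+k) = u!k)"

lemma map_eq_occ: "map (\<lambda>k. Y (i+k)) [0..<length u] = u \<longleftrightarrow> occ Y u i"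
  unfolding occ_def
  apply (subst list_eq_iff_nth_eq)
  apply (simp only: length_map length_upt)
  apply simp
  done

lemma is_factor_occ: "is_factor Y u \<longleftrightarrow> (\<exists>i. occ Y u i)"
  unfolding is_factor_def map_eq_occ ..

definition win :: "word \<Rightarrow> nat \<Rightarrow> nat \<Rightarrow> letter list" where
  "win Y i n = map (\<lambda>k. Y (i+k)) [0..<n]"

lemma length_win[simp]: "length (win Y i n) = n" by (simp add: win_def)
lemma nth_win[simp]: "k < n \<Longrightarrow> win Y i n ! k = Y (i+k)" by (simp add: win_def)
lemma win_Suc: "win Y i (Suc n) = win Y i n @ [Y (i+n)]" by (simp add: win_def)
lemma win_eq: "win Y p n = win Y q n \<longleftrightarrow> (\<forall>k<n. Y(p+k) = Y(q+k))"
  apply (subst list_eq_iff_nth_eq)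
  apply (simp only: length_win)
  apply simp
  done
lemma occ_win_eq: "occ Y u i \<longleftrightarrow> win Y i (length u) = u"
  unfolding win_def map_eq_occ ..
lemma factor_win: "is_factor Y (win Y i n)"
  using occ_win_eq is_factor_occ by (metis length_win)

lemma occ_Nil[simp]: "occ Y [] i" by (simp add: occ_def)

lemma occ_Cons: "occ Y (c#u) i \<longleftrightarrow> Y i = c \<and> occ Y u (Suc i)"
proof
  assume H: "occ Y (c#u) i"
  have "Y i = c" using H[unfolded occ_def, rule_format, of 0] by simp
  moreover have "occ Y u (Suc i)" unfolding occ_def
  proof (intro allI impI)
    fix k assume "k < length u"
    then show "Y (Suc i + k) = u ! k" using H[unfolded occ_def, rule_format, of "Suc k"] by simp
  qed
  ultimately show "Y i = c \<and> occ Y u (Suc i)" by simp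
next
  assume H: "Y i = c \<and> occ Y u (Suc i)"
  show "occ Y (c#u) i" unfolding occ_def
  proof (intro allI impI)
    fix k assume "k < length (c#u)"
    then show "Y (i + k) = (c#u) ! k" using H unfolding occ_def
      by (cases k) auto
  qed
qed

lemma occ_append: "occ Y (u@w) i \<longleftrightarrow> occ Y u i \<and> occ Y w (i + length u)"
proof
  assume H: "occ Y (u@w) i"
  have "occ Y u i" unfolding occ_def
  proof (intro allI impI)
    fix k assume "k < length u"
    then show "Y (i + k) = u ! k" using H[unfolded occ_def, rule_format, of k] by (simp add: nth_append)
  qed
  moreover have "occ Y w (i + length u)" unfolding occ_def
  proof (intro allI impI)
    fix k assume "k < length w"
    then show "Y (i + length u + k) = w ! k" using H[unfolded occ_def, rule_format, of "length u + k"]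
      by (simp add: nth_append add.assoc)
  qed
  ultimately show "occ Y u i \<and> occ Y w (i + length u)" by simp
next
  assume H: "occ Y u i \<and> occ Y w (i + length u)"
  show "occ Y (u@w) i" unfolding occ_def
  proof (intro allI impI)
    fix k assume k: "k < length (u@w)"
    show "Y (i + k) = (u@w) ! k"
    proof (cases "k < length u")
      case True then show ?thesis using H unfolding occ_def by (simp add: nth_append)
    next
      case False
      then have "k - length u < length w" using k by simp
      then have "Y (i + length u + (k - length u)) = w ! (k - length u)" using H unfolding occ_def by blast
      then show ?thesis using False by (simp add: nth_append)
    qed
  qed
qed

lemma factor_appendD1: "is_factor Y (u@w) \<Longrightarrow> is_factor Y u"
  using occ_append is_factor_occ by metis
lemma factor_appendD2: "is_factor Y (u@w) \<Longrightarrow> is_factor Y w"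
  using occ_append is_factor_occ by metis
lemma factor_ConsD: "is_factor Y (c#w) \<Longrightarrow> is_factor Y w"
  using occ_Cons is_factor_occ by metis

lemma right_ext: "is_factor Y u \<Longrightarrow> \<exists>c. is_factor Y (u@[c])"
proof -
  assume "is_factor Y u"
  then obtain i where "occ Y u i" using is_factor_occ by blast
  then have "occ Y (u@[Y (i + length u)]) i" by (simp add: occ_append occ_Cons)
  then show ?thesis using is_factor_occ by blast
qed

definition RS :: "word \<Rightarrow> letter list \<Rightarrow> bool" where
  "RS Y u \<longleftrightarrow> is_factor Y (u@[a]) \<and> is_factor Y (u@[b])"
definition LS :: "word \<Rightarrow> letter list \<Rightarrow> bool" where
  "LS Y u \<longleftrightarrow> is_factor Y (a#u) \<and> is_factor Y (b#u)"

lemma RS_I: "x \<noteq> y \<Longrightarrow> is_factor Y (u@[x]) \<Longrightarrow> is_factor Y (u@[y]) \<Longrightarrow> RS Y u"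
  unfolding RS_def by (cases x; cases y) auto
lemma LS_I: "x \<noteq> y \<Longrightarrow> is_factor Y (x#u) \<Longrightarrow> is_factor Y (y#u) \<Longrightarrow> LS Y u"
  unfolding LS_def by (cases x; cases y) auto
lemma RS_all: "RS Y u \<Longrightarrow> is_factor Y (u@[z])"
  unfolding RS_def by (cases z) auto
lemma LS_all: "LS Y u \<Longrightarrow> is_factor Y (z#u)"
  unfolding LS_def by (cases z) auto
lemma nonRS: "\<not> RS Y u \<Longrightarrow> is_factor Y (u@[c]) \<Longrightarrow> is_factor Y (u@[d]) \<Longrightarrow> c = d"
  using RS_I by blast
lemma nonLS: "\<not> LS Y u \<Longrightarrow> is_factor Y (c#u) \<Longrightarrow> is_factor Y (d#u) \<Longrightarrow> c = d"
  using LS_I by blast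
lemma RS_factor: "RS Y u \<Longrightarrow> is_factor Y u"
  unfolding RS_def using factor_appendD1 by blast
lemma LS_factor: "LS Y u \<Longrightarrow> is_factor Y u"
  unfolding LS_def using factor_ConsD by blast

lemma fl_iff: "u \<in> factors_of_length Y n \<longleftrightarrow> length u = n \<and> is_factor Y u"
  by (simp add: factors_of_length_def)

lemma UNIV_letter: "(UNIV :: letter set) = {a, b}" using letter2 by auto

lemma finite_fl: "finite (factors_of_length Y n)"
proof (rule finite_subset)
  show "factors_of_length Y n \<subseteq> {xs. set xs \<subseteq> UNIV \<and> length xs = n}"
    by (auto simp: factors_of_length_def)
  show "finite {xs. set xs \<subseteq> (UNIV::letter set) \<and> length xs = n}"
    by (rule finite_lists_length_eq) (simp add: UNIV_letter)
qed

lemma fl0: "factors_of_length Y 0 = {[]}"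
  by (auto simp: factors_of_length_def is_factor_def)

lemma card_sturm: "sturmian X \<Longrightarrow> card (factors_of_length X n) = n + 1"
  by (simp add: sturmian_def)

lemma card_RS:
  assumes R: "R \<subseteq> factors_of_length Y n" and RR: "\<forall>u\<in>R. RS Y u"
  shows "card (factors_of_length Y n) + card R \<le> card (factors_of_length Y (Suc n))"
proof -
  define e where "e u = (if is_factor Y (u@[a]) then a else b)" for u
  define f where "f u = u @ [e u]" for u
  define g where "g u = u @ [b]" for u :: "letter list"
  let ?F = "factors_of_length Y n" and ?G = "factors_of_length Y (Suc n)"
  have fF: "f ` ?F \<subseteq> ?G"
  proof
    fix w assume "w \<in> f ` ?F"
    then obtain u where u: "u \<in> ?F" "w = f u" by blast
    then obtain c where c: "is_factor Y (u@[c])" using right_ext fl_iff by blast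
    have "is_factor Y (u @ [e u])"
      using c letter2[of c] unfolding e_def by auto
    then show "w \<in> ?G" using u by (simp add: f_def fl_iff)
  qed
  have gR: "g ` R \<subseteq> ?G" using R RR by (auto simp: g_def fl_iff RS_def)
  have disj: "f ` ?F \<inter> g ` R = {}"
  proof (rule ccontr)
    assume "f ` ?F \<inter> g ` R \<noteq> {}"
    then obtain u v where "u \<in> ?F" "v \<in> R" "f u = g v" by blast
    then have "u = v" "e u = b" by (auto simp: f_def g_def)
    moreover have "e v = a" using \<open>v \<in> R\<close> RR by (simp add: e_def RS_def)
    ultimately show False by simp
  qed
  have injf: "inj_on f ?F" by (auto simp: inj_on_def f_def)
  have injg: "inj_on g R" by (auto simp: inj_on_def g_def)
  have finR: "finite R" using R finite_fl finite_subset by blast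
  have "card (f ` ?F \<union> g ` R) = card ?F + card R"
    using card_Un_disjoint[OF finite_imageI[OF finite_fl] finite_imageI[OF finR] disj]
      card_image[OF injf] card_image[OF injg] by simp
  moreover have "card (f ` ?F \<union> g ` R) \<le> card ?G"
    by (rule card_mono[OF finite_fl]) (use fF gR in blast)
  ultimately show ?thesis by simp
qed

lemma card_LS:
  assumes R: "R \<subseteq> factors_of_length Y n" and RR: "\<forall>u\<in>R. LS Y u"
    and ext: "\<forall>u\<in>factors_of_length Y n. \<exists>c. is_factor Y (c#u)"
  shows "card (factors_of_length Y n) + card R \<le> card (factors_of_length Y (Suc n))"
proof -
  define e where "e u = (if is_factor Y (a#u) then a else b)" for u
  define f where "f u = e u # u" for u
  define g where "g u = b # u" for u :: "letter list"
  let ?F = "factors_of_length Y n" and ?G = "factors_of_length Y (Suc n)"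
  have fF: "f ` ?F \<subseteq> ?G"
  proof
    fix w assume "w \<in> f ` ?F"
    then obtain u where u: "u \<in> ?F" "w = f u" by blast
    then obtain c where c: "is_factor Y (c#u)" using ext by blast
    have "is_factor Y (e u # u)"
      using c letter2[of c] unfolding e_def by auto
    then show "w \<in> ?G" using u by (simp add: f_def fl_iff)
  qed
  have gR: "g ` R \<subseteq> ?G" using R RR by (auto simp: g_def fl_iff LS_def)
  have disj: "f ` ?F \<inter> g ` R = {}"
  proof (rule ccontr)
    assume "f ` ?F \<inter> g ` R \<noteq> {}"
    then obtain u v where "u \<in> ?F" "v \<in> R" "f u = g v" by blast
    then have "u = v" "e u = b" by (auto simp: f_def g_def)
    moreover have "e v = a" using \<open>v \<in> R\<close> RR by (simp add: e_def LS_def)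
    ultimately show False by simp
  qed
  have injf: "inj_on f ?F" by (auto simp: inj_on_def f_def)
  have injg: "inj_on g R" by (auto simp: inj_on_def g_def)
  have finR: "finite R" using R finite_fl finite_subset by blast
  have "card (f ` ?F \<union> g ` R) = card ?F + card R"
    using card_Un_disjoint[OF finite_imageI[OF finite_fl] finite_imageI[OF finR] disj]
      card_image[OF injf] card_image[OF injg] by simp
  moreover have "card (f ` ?F \<union> g ` R) \<le> card ?G"
    by (rule card_mono[OF finite_fl]) (use fF gR in blast)
  ultimately show ?thesis by simp
qed

lemma RS_unique:
  assumes st: "sturmian X" and "RS X u" "RS X v" "length u = length v"
  shows "u = v"
proof (rule ccontr)
  assume uv: "u \<noteq> v"
  let ?n = "length u"
  have "{u, v} \<subseteq> factors_of_length X ?n" using assms RS_factor by (auto simp: fl_iff)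
  from card_RS[OF this] assms have "card (factors_of_length X ?n) + card {u,v} \<le> card (factors_of_length X (Suc ?n))"
    by auto
  then show False using uv card_sturm[OF st] by simp
qed



lemma det:
  assumes "\<forall>k<j. Y(p+k) = Y(q+k)" "\<forall>t<T. \<not> RS Y (win Y (p+t) j)"
  shows "\<forall>k<j+T. Y(p+k) = Y(q+k)"
  using assms(2)
proof (induction T)
  case 0
  then show ?case using assms(1) by simp
next
  case (Suc T)
  then have IH: "\<forall>k<j+T. Y(p+k) = Y(q+k)" by simp
  have nrs: "\<not> RS Y (win Y (p+T) j)" using Suc.prems by simp
  have weq: "win Y (p+T) j = win Y (q+T) j"
    unfolding win_eq
  proof (intro allI impI)
    fix k assume "k < j"
    then have "T + k < j + T" by simp
    then have "Y (p + (T+k)) = Y (q + (T+k))" using IH by blast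
    then show "Y (p + T + k) = Y (q + T + k)" by (simp add: add.assoc)
  qed
  have f1: "is_factor Y (win Y (p+T) j @ [Y (p+T+j)])" by (metis factor_win win_Suc)
  have f2: "is_factor Y (win Y (p+T) j @ [Y (q+T+j)])" using weq by (metis factor_win win_Suc)
  have "Y (p+T+j) = Y (q+T+j)" using nonRS[OF nrs f1 f2] .
  then have last: "Y (p + (j+T)) = Y (q + (j+T))" by (simp add: ac_simps)
  show ?case
  proof (intro allI impI)
    fix k assume "k < j + Suc T"
    then have "k < j + T \<or> k = j + T" by auto
    then show "Y (p+k) = Y (q+k)" using IH last by auto
  qed
qed

lemma ep:
  assumes "\<forall>t. \<not> RS Y (win Y (r+t) j)"
  shows "eventually_periodic Y"
proof -
  let ?F = "factors_of_length Y j"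
  define f where "f t = win Y (r+t) j" for t
  have im: "f ` {0..card ?F} \<subseteq> ?F" by (auto simp: f_def fl_iff factor_win)
  have "\<not> inj_on f {0..card ?F}"
  proof
    assume "inj_on f {0..card ?F}"
    from card_inj_on_le[OF this im finite_fl] show False by simp
  qed
  then obtain t1 t2 where t: "t1 \<noteq> t2" "f t1 = f t2" by (auto simp: inj_on_def)
  then obtain t1 t2 where t12: "t1 < t2" "f t1 = f t2" by (metis linorder_neqE_nat)
  have all: "\<forall>T. \<forall>k<j+T. Y(r+t1+k) = Y(r+t2+k)"
  proof
    fix T
    show "\<forall>k<j+T. Y(r+t1+k) = Y(r+t2+k)"
    proof (rule det)
      show "\<forall>k<j. Y (r + t1 + k) = Y (r + t2 + k)" using t12(2) by (simp add: f_def win_eq)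
      show "\<forall>t<T. \<not> RS Y (win Y (r + t1 + t) j)" using assms by (metis add.assoc)
    qed
  qed
  have per: "\<forall>k. Y(r+t1+k) = Y(r+t2+k)"
  proof
    fix k
    have "k < j + Suc k" by simp
    then show "Y(r+t1+k) = Y(r+t2+k)" using all by blast
  qed
  show ?thesis unfolding eventually_periodic_def
  proof (intro exI conjI allI impI)
    show "0 < t2 - t1" using t12 by simp
    fix n assume "r + t1 \<le> n"
    then obtain k where n: "n = r + t1 + k" by (metis le_add_diff_inverse)
    have e: "n + (t2 - t1) = r + t2 + k" using n t12 by simp
    have "Y (r + t1 + k) = Y (r + t2 + k)" using per by blast
    then show "Y (n + (t2 - t1)) = Y n" by (metis e n)
  qed
qed

lemma rec1:
  assumes st: "sturmian X" and fu: "is_factor X u"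
  shows "\<exists>i\<ge>1. occ X u i"
proof (rule ccontr)
  assume H: "\<not> (\<exists>i\<ge>1. occ X u i)"
  define X' where "X' = (\<lambda>t. X (Suc t))"
  let ?k = "length u"
  have occ': "occ X w (Suc i)" if "occ X' w i" for w i
    using that by (simp add: occ_def X'_def)
  have sub: "factors_of_length X' ?k \<subseteq> factors_of_length X ?k - {u}"
  proof
    fix w assume w: "w \<in> factors_of_length X' ?k"
    then obtain i where i: "occ X' w i" by (auto simp: fl_iff is_factor_occ)
    then have "occ X w (Suc i)" by (rule occ')
    moreover have "w \<noteq> u" using H \<open>occ X w (Suc i)\<close> by auto
    ultimately show "w \<in> factors_of_length X ?k - {u}" using w by (auto simp: fl_iff is_factor_occ)
  qed
  have uin: "u \<in> factors_of_length X ?k" using fu by (simp add: fl_iff)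
  have c1: "card (factors_of_length X' ?k) \<le> ?k"
  proof -
    have "card (factors_of_length X' ?k) \<le> card (factors_of_length X ?k - {u})"
      by (rule card_mono) (use finite_fl sub in auto)
    also have "\<dots> = ?k" using card_Diff_singleton[OF uin] card_sturm[OF st] by simp
    finally show ?thesis .
  qed
  have "\<exists>j<?k. \<forall>w. length w = j \<longrightarrow> \<not> RS X' w"
  proof (rule ccontr)
    assume "\<not> ?thesis"
    then have A: "\<forall>j<?k. \<exists>w. length w = j \<and> RS X' w" by auto
    have "j + 1 \<le> card (factors_of_length X' j)" if "j \<le> ?k" for j
      using that
    proof (induction j)
      case 0
      then show ?case by (simp add: fl0)
    next
      case (Suc j)
      have "j < ?k" using Suc.prems by simp
      then obtain w where w: "length w = j" "RS X' w" using A by blast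
      have "{w} \<subseteq> factors_of_length X' j" using w RS_factor by (auto simp: fl_iff)
      from card_RS[OF this] w have "card (factors_of_length X' j) + 1 \<le> card (factors_of_length X' (Suc j))"
        by simp
      moreover have "j + 1 \<le> card (factors_of_length X' j)" using Suc by simp
      ultimately show ?case by simp
    qed
    then have "?k + 1 \<le> card (factors_of_length X' ?k)" by simp
    then show False using c1 by simp
  qed
  then obtain j where "\<forall>w. length w = j \<longrightarrow> \<not> RS X' w" by auto
  then have "\<forall>t. \<not> RS X' (win X' (0+t) j)" by simp
  then have "eventually_periodic X'" by (rule ep)
  then obtain p N where pN: "p > 0" "\<forall>n\<ge>N. X' (n + p) = X' n"
    by (auto simp: eventually_periodic_def)
  have "eventually_periodic X" unfolding eventually_periodic_def
  proof (intro exI conjI allI impI)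
    show "0 < p" by fact
    fix n assume "Suc N \<le> n"
    then obtain m where m: "n = Suc m" "N \<le> m" by (cases n) auto
    then show "X (n + p) = X n" using pN(2) by (simp add: X'_def)
  qed
  then show False using st by (simp add: sturmian_def)
qed

lemma rec_after:
  assumes st: "sturmian X" and o: "occ X u p"
  shows "\<exists>i>p. occ X u i"
proof -
  define v where "v = win X 0 (p + length u)"
  obtain s where s: "s \<ge> 1" "occ X v s" using rec1[OF st factor_win[of X 0 "p + length u"]] v_def by auto
  have "occ X u (s+p)" unfolding occ_def
  proof (intro allI impI)
    fix k assume k: "k < length u"
    have "X (s + (p+k)) = v ! (p+k)" using s(2) k by (simp add: occ_def v_def)
    also have "\<dots> = X (p+k)" using k by (simp add: v_def)
    also have "\<dots> = u ! k" using o k by (simp add: occ_def)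
    finally show "X (s + p + k) = u ! k" by (simp add: add.assoc)
  qed
  then show ?thesis using s(1) by (intro exI[of _ "s+p"]) auto
qed

lemma left_ext:
  assumes st: "sturmian X" and fu: "is_factor X u"
  shows "\<exists>c. is_factor X (c#u)"
proof -
  obtain i where i: "i \<ge> 1" "occ X u i" using rec1[OF st fu] by auto
  then have "occ X (X (i-1) # u) (i-1)" by (simp add: occ_Cons)
  then show ?thesis using is_factor_occ by blast
qed

lemma LS_unique:
  assumes st: "sturmian X" and "LS X u" "LS X v" "length u = length v"
  shows "u = v"
proof (rule ccontr)
  assume uv: "u \<noteq> v"
  let ?n = "length u"
  have "{u, v} \<subseteq> factors_of_length X ?n" using assms LS_factor by (auto simp: fl_iff)
  from card_LS[OF this] assms left_ext[OF st]
  have "card (factors_of_length X ?n) + card {u,v} \<le> card (factors_of_length X (Suc ?n))"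
    by (auto simp: fl_iff)
  then show False using uv card_sturm[OF st] by simp
qed

lemma LS_exists:
  assumes st: "sturmian X"
  shows "\<exists>u. length u = n \<and> LS X u"
proof -
  let ?F = "factors_of_length X n" and ?G = "factors_of_length X (Suc n)"
  have im: "tl ` ?G \<subseteq> ?F"
  proof
    fix w assume "w \<in> tl ` ?G"
    then obtain z where z: "z \<in> ?G" "w = tl z" by blast
    then obtain c t where "z = c # t" by (cases z) (auto simp: fl_iff)
    then show "w \<in> ?F" using z factor_ConsD by (auto simp: fl_iff)
  qed
  have "\<not> inj_on tl ?G"
  proof
    assume "inj_on tl ?G"
    from card_inj_on_le[OF this im finite_fl] card_sturm[OF st] show False by simp
  qed
  then obtain z1 z2 where z: "z1 \<in> ?G" "z2 \<in> ?G" "z1 \<noteq> z2" "tl z1 = tl z2"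
    by (auto simp: inj_on_def)
  obtain c1 t1 where z1: "z1 = c1 # t1" using z(1) by (cases z1) (auto simp: fl_iff)
  obtain c2 t2 where z2: "z2 = c2 # t2" using z(2) by (cases z2) (auto simp: fl_iff)
  have "t1 = t2" using z(4) z1 z2 by simp
  then have "c1 \<noteq> c2" using z(3) z1 z2 by simp
  then have "LS X t1" using LS_I z z1 z2 \<open>t1 = t2\<close> by (auto simp: fl_iff)
  moreover have "length t1 = n" using z(1) z1 by (simp add: fl_iff)
  ultimately show ?thesis by blast
qed

lemma LS_prefix: "LS Y (u@[z]) \<Longrightarrow> LS Y u"
  unfolding LS_def using factor_appendD1 by (metis append_Cons)



lemma occ_nth: "occ Y u i \<Longrightarrow> k < length u \<Longrightarrow> Y (i+k) = u!k"
  by (simp add: occ_def)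

lemma bad_case:
  assumes st: "sturmian X" and xy: "x \<noteq> y" and pal: "rev v = v"
    and f1: "is_factor X (x#v@[x])" and f2: "is_factor X (x#v@[y])"
    and f3: "is_factor X (y#v)" and nf: "\<not> is_factor X (y#v@[x])"
  shows False
proof -
  let ?m = "length v"
  let ?A = "x#v"
  have rsA: "RS X ?A" using RS_I[OF xy, of X ?A] f1 f2 by simp
  have nrs: "\<not> RS X w" if "length w = Suc ?m" "w \<noteq> ?A" for w
    using RS_unique[OF st _ rsA] that by force
  obtain r where r: "occ X (y#v) r" using f3 is_factor_occ by auto
  define W where "W t = win X (r+t) (Suc ?m)" for t
  have W0: "W 0 = y#v" using r by (simp add: W_def occ_win_eq)
  have ex: "\<exists>e. W e = ?A"
  proof (rule ccontr)
    assume "\<not> ?thesis"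
    then have "\<forall>t. \<not> RS X (win X (r+t) (Suc ?m))" using nrs by (auto simp: W_def)
    then have "eventually_periodic X" by (rule ep)
    with st show False by (simp add: sturmian_def)
  qed
  define e where "e = (LEAST e. W e = ?A)"
  have We: "W e = ?A" using LeastI_ex[OF ex] e_def by simp
  have emin: "W t \<noteq> ?A" if "t < e" for t using not_less_Least[of t "\<lambda>e. W e = ?A"] that e_def by blast
  have e1: "e \<noteq> 0" using W0 We xy by (metis list.inject)
  have inj: "inj_on W {0..e}"
  proof (rule ccontr)
    assume "\<not> inj_on W {0..e}"
    then obtain i0 k0 where "i0 \<in> {0..e}" "k0 \<in> {0..e}" "i0 \<noteq> k0" "W i0 = W k0"
      by (auto simp: inj_on_def)
    then obtain i k where ik: "i < k" "k \<le> e" "W i = W k"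
      by (metis atLeastAtMost_iff linorder_neqE_nat)
    have ke: "k < e"
    proof (rule ccontr)
      assume "\<not> k < e"
      then have "k = e" using ik by simp
      then show False using ik emin We by auto
    qed
    have d: "\<forall>\<kappa><Suc ?m + (e-k). X(r+i+\<kappa>) = X(r+k+\<kappa>)"
    proof (rule det)
      show "\<forall>\<kappa><Suc ?m. X (r + i + \<kappa>) = X (r + k + \<kappa>)"
        using ik(3) by (simp add: W_def win_eq)
      show "\<forall>t<e - k. \<not> RS X (win X (r + i + t) (Suc ?m))"
      proof (intro allI impI)
        fix t assume "t < e - k"
        then have "i + t < e" using ik by simp
        then have "W (i+t) \<noteq> ?A" by (rule emin)
        then show "\<not> RS X (win X (r + i + t) (Suc ?m))"
          using nrs by (simp add: W_def add.assoc)
      qed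
    qed
    have "W (i + (e-k)) = W e" unfolding W_def win_eq
    proof (intro allI impI)
      fix \<kappa> assume "\<kappa> < Suc ?m"
      then have "(e-k) + \<kappa> < Suc ?m + (e-k)" by simp
      then have "X (r+i+((e-k)+\<kappa>)) = X (r+k+((e-k)+\<kappa>))" using d by blast
      moreover have "r + k + ((e-k)+\<kappa>) = r + e + \<kappa>" using ke by simp
      ultimately show "X (r + (i + (e - k)) + \<kappa>) = X (r + e + \<kappa>)" by (simp add: ac_simps)
    qed
    moreover have "i + (e-k) < e" using ik ke by simp
    ultimately show False using emin We by auto
  qed
  have "card (W ` {0..e}) = Suc e" using card_image[OF inj] by simp
  moreover have "W ` {0..e} \<subseteq> factors_of_length X (Suc ?m)" by (auto simp: W_def fl_iff factor_win)
  ultimately have "Suc e \<le> card (factors_of_length X (Suc ?m))"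
    using card_mono[OF finite_fl] by metis
  then have eb: "e \<le> Suc ?m" using card_sturm[OF st] by simp
  have Xy: "X (r + Suc ?m) = y"
  proof -
    have "win X r (Suc ?m) = y#v" using W0 by (simp add: W_def)
    then have "win X r (Suc (Suc ?m)) = (y#v) @ [X (r + Suc ?m)]" by (simp add: win_Suc)
    then have "is_factor X ((y#v) @ [X (r + Suc ?m)])" by (metis factor_win)
    then have "X (r + Suc ?m) \<noteq> x" using nf by auto
    then show ?thesis using letter_other[OF xy] by blast
  qed
  have oA: "occ X ?A (r+e)" using We by (simp add: W_def occ_win_eq)
  then have Xe: "X (r+e) = x" and oAv: "occ X v (Suc (r+e))" by (auto simp: occ_Cons)
  have oBv: "occ X v (Suc r)" using r by (simp add: occ_Cons)
  show False
  proof (cases "e = Suc ?m")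
    case True
    then show False using Xe Xy xy by simp
  next
    case False
    then have em: "e \<le> ?m" "1 \<le> e" using eb e1 by auto
    have "X (Suc r + (e-1)) = v ! (e-1)" by (rule occ_nth[OF oBv]) (use em in simp)
    moreover have "Suc r + (e-1) = r + e" using em by simp
    ultimately have vx: "v ! (e-1) = x" using Xe by simp
    have "X (Suc (r+e) + (?m - e)) = v ! (?m - e)" by (rule occ_nth[OF oAv]) (use em in simp)
    moreover have "Suc (r+e) + (?m - e) = r + Suc ?m" using em by simp
    ultimately have vy: "v ! (?m - e) = y" using Xy by simp
    have "rev v ! (e-1) = v ! (?m - Suc (e-1))" using em by (simp add: rev_nth)
    then have "v ! (e-1) = v ! (?m - e)" using pal em by simp
    then show False using vx vy xy by simp
  qed
qed

lemma rev_closed: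
  assumes st: "sturmian X"
  shows "is_factor X u \<Longrightarrow> is_factor X (rev u)"
proof (induction "length u" arbitrary: u rule: less_induct)
  case less
  show ?case
  proof (cases "length u \<le> 1")
    case True
    then have "rev u = u" by (cases u) auto
    then show ?thesis using less.prems by simp
  next
    case False
    then obtain x w where u0: "u = x # w" "w \<noteq> []" by (cases u) auto
    then obtain v y where w: "w = v @ [y]" by (metis rev_exhaust)
    have u: "u = x # v @ [y]" using u0 w by simp
    have IH: "\<And>u'. length u' < length u \<Longrightarrow> is_factor X u' \<Longrightarrow> is_factor X (rev u')"
      using less.hyps by blast
    have fu: "is_factor X (x#v@[y])" using less.prems u by simp
    have g1: "is_factor X (rev v @ [x])"
    proof -
      have "is_factor X (x#v)" using fu factor_appendD1[of X "x#v" "[y]"] by simp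
      then have "is_factor X (rev (x#v))" using IH[of "x#v"] u by simp
      then show ?thesis by simp
    qed
    have g2: "is_factor X (y # rev v)"
    proof -
      have "is_factor X (v@[y])" using fu factor_ConsD by blast
      then have "is_factor X (rev (v@[y]))" using IH[of "v@[y]"] u by simp
      then show ?thesis by simp
    qed
    have ru: "rev u = y # rev v @ [x]" using u by simp
    show ?thesis
    proof (cases "RS X (rev v)")
      case False
      obtain c where c: "is_factor X ((y # rev v) @ [c])" using right_ext[OF g2] by blast
      then have "is_factor X (rev v @ [c])" using factor_ConsD by auto
      then have "c = x" using nonRS[OF False] g1 by blast
      then show ?thesis using c ru by simp
    next
      case rsv': True
      show ?thesis
      proof (cases "LS X (rev v)")
        case False
        obtain c where c: "is_factor X (c # rev v @ [x])" using left_ext[OF st g1] by blast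
        then have "is_factor X (c # rev v)" using factor_appendD1[of X "c # rev v" "[x]"] by simp
        then have "c = y" using nonLS[OF False] g2 by blast
        then show ?thesis using c ru by simp
      next
        case lsv': True
        have rsv: "RS X v"
        proof -
          have "is_factor X (a # rev v)" "is_factor X (b # rev v)" using lsv' by (auto simp: LS_def)
          then have "is_factor X (rev (a # rev v))" "is_factor X (rev (b # rev v))"
            using IH[of "a # rev v"] IH[of "b # rev v"] u by auto
          then show ?thesis by (simp add: RS_def)
        qed
        have vv: "rev v = v" using RS_unique[OF st rsv' rsv] by simp
        show ?thesis
        proof (cases "x = y")
          case True
          then show ?thesis using fu ru vv by simp
        next
          case xy: False
          show ?thesis
          proof (rule ccontr)
            assume "\<not> is_factor X (rev u)"
            then have nfac: "\<not> is_factor X (y#v@[x])" using ru vv by simp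
            obtain L where L: "length L = Suc (length v)" "LS X L" using LS_exists[OF st] by blast
            then obtain L0 z where Lz: "L = L0 @ [z]" by (metis length_Suc_conv rev_exhaust list.distinct(1))
            have "LS X L0" using LS_prefix L Lz by blast
            moreover have "LS X v" using lsv' vv by simp
            moreover have "length L0 = length v" using L Lz by simp
            ultimately have "L0 = v" using LS_unique[OF st] by blast
            then have fxz: "is_factor X (x # v @ [z])" and fyz: "is_factor X (y # v @ [z])"
              using L Lz LS_all by auto
            have "z \<noteq> x" using fyz nfac by auto
            then have zy: "z = y" using letter_other[OF xy] by blast
            have F2: "is_factor X (x#v@[y])" using fxz zy by simp
            have F3: "is_factor X (y#v)" using fyz factor_appendD1[of X "y#v" "[z]"] by simp
            obtain c where c: "is_factor X (c # v @ [x])" using left_ext[OF st RS_all[OF rsv, of x]] by blast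
            then have "c \<noteq> y" using nfac by auto
            then have "c = x" using letter_other[OF xy] by blast
            then have F1: "is_factor X (x#v@[x])" using c by simp
            show False using bad_case[OF st xy vv F1 F2 F3 nfac] .
          qed
        qed
      qed
    qed
  qed
qed



lemma length_fac[simp]: "length (fac X i j) = Suc j - i" by (simp add: fac_def del: upt_Suc)
lemma nth_fac: "k < Suc j - i \<Longrightarrow> fac X i j ! k = X (i + k)" by (simp add: fac_def del: upt_Suc)

lemma pal_fac:
  assumes ij: "i \<le> j"
  shows "palindrome (fac X i j) \<longleftrightarrow> (\<forall>t. i \<le> t \<longrightarrow> t \<le> j \<longrightarrow> X t = X (i + j - t))"
proof -
  have "palindrome (fac X i j) \<longleftrightarrow> (\<forall>k < Suc j - i. rev (fac X i j) ! k = fac X i j ! k)"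
    unfolding palindrome_def
    apply (subst list_eq_iff_nth_eq)
    apply (simp only: length_rev)
    apply simp
    done
  also have "\<dots> \<longleftrightarrow> (\<forall>k < Suc j - i. X (j - k) = X (i + k))"
  proof -
    have "rev (fac X i j) ! k = X (j - k)" if "k < Suc j - i" for k
    proof -
      have "rev (fac X i j) ! k = fac X i j ! (Suc j - i - Suc k)" using that by (simp add: rev_nth)
      also have "\<dots> = X (i + (Suc j - i - Suc k))" using that by (simp add: nth_fac)
      also have "i + (Suc j - i - Suc k) = j - k" using that ij by simp
      finally show ?thesis .
    qed
    then show ?thesis using nth_fac by auto
  qed
  also have "\<dots> \<longleftrightarrow> (\<forall>t. i \<le> t \<longrightarrow> t \<le> j \<longrightarrow> X t = X (i + j - t))"
  proof
    assume H: "\<forall>k < Suc j - i. X (j - k) = X (i + k)"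
    show "\<forall>t. i \<le> t \<longrightarrow> t \<le> j \<longrightarrow> X t = X (i + j - t)"
    proof (intro allI impI)
      fix t assume t: "i \<le> t" "t \<le> j"
      then have "t - i < Suc j - i" by simp
      then have "X (j - (t-i)) = X (i + (t-i))" using H by blast
      moreover have "j - (t-i) = i + j - t" "i + (t - i) = t" using t by auto
      ultimately show "X t = X (i + j - t)" by simp
    qed
  next
    assume H: "\<forall>t. i \<le> t \<longrightarrow> t \<le> j \<longrightarrow> X t = X (i + j - t)"
    show "\<forall>k < Suc j - i. X (j - k) = X (i + k)"
    proof (intro allI impI)
      fix k assume k: "k < Suc j - i"
      then have "X (i+k) = X (i + j - (i+k))" using H[rule_format, of "i+k"] by simp
      moreover have "i + j - (i+k) = j - k" by simp
      ultimately show "X (j - k) = X (i + k)" by simp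
    qed
  qed
  finally show ?thesis .
qed

theorem lemma6:
  fixes X :: word and P :: "letter list"
  assumes "sturmian X" and "palindrome P" and "P \<noteq> []" and "maximal_pal X P"
  shows "\<exists>i' i j j'. i' < i \<and> i \<le> j \<and> j < j' \<and> 1 \<le> i' \<and> i + j = i' + j' \<and>
           fac X i j = P \<and> X (i - 1) = X (j + 1) \<and>
           palindrome (fac X i' j') \<and> X (i' - 1) \<noteq> X (j' + 1)"
proof (rule ccontr)
  assume neg: "\<not> ?thesis"
  note st = assms(1)
  from assms(4) obtain l l' where ll: "l \<noteq> l'" "is_factor X (l # P @ [l'])"
    by (auto simp: maximal_pal_def)
  have palP: "rev P = P" using assms(2) by (simp add: palindrome_def)
  have h1: "is_factor X (l # P)" using ll(2) factor_appendD1[of X "l#P" "[l']"] by simp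
  have h2: "is_factor X (P @ [l'])" using ll(2) factor_ConsD by blast
  have h4: "is_factor X (l' # P)" using rev_closed[OF st h2] palP by simp
  have lsP: "LS X P" using LS_I[OF ll(1) h1 h4] .
  obtain L where L: "length L = Suc (length P)" "LS X L" using LS_exists[OF st] by blast
  then obtain L0 c where Lz: "L = L0 @ [c]" by (metis length_Suc_conv rev_exhaust list.distinct(1))
  have "LS X L0" using LS_prefix L Lz by blast
  moreover have "length L0 = length P" using L Lz by simp
  ultimately have "L0 = P" using LS_unique[OF st] lsP by blast
  then have fQ: "is_factor X (c # P @ [c])" using L Lz LS_all by auto
  let ?n = "length P"
  define Q where "Q = c # P @ [c]"
  have lenQ: "length Q = ?n + 2" by (simp add: Q_def)
  have n1: "?n \<ge> 1" using assms(3) by (cases P) auto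
  have K: "\<forall>t \<le> 2*s + ?n + 1. X t = X (2*s + ?n + 1 - t)" if os: "occ X Q s" for s
  proof -
    define i where "i = Suc s"
    define j where "j = s + ?n"
    have ij: "i \<le> j" using n1 by (simp add: i_def j_def)
    have facP: "fac X i j = P"
    proof (rule nth_equalityI)
      show "length (fac X i j) = length P" by (simp add: i_def j_def)
      fix k assume "k < length (fac X i j)"
      then have k: "k < ?n" by (simp add: i_def j_def)
      then have "fac X i j ! k = X (Suc s + k)" by (simp add: nth_fac i_def j_def)
      also have "\<dots> = Q ! Suc k" using occ_nth[OF os, of "Suc k"] k lenQ by simp
      also have "\<dots> = P ! k" using k by (simp add: Q_def nth_append)
      finally show "fac X i j ! k = P ! k" .
    qed
    have match: "X (i - 1) = X (j + 1)"
    proof -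
      have q0: "Q ! 0 = c" by (simp add: Q_def)
      have q1: "Q ! Suc ?n = c" by (simp add: Q_def nth_append)
      have "X (s + 0) = Q ! 0" by (rule occ_nth[OF os]) (simp add: lenQ)
      then have A: "X s = c" using q0 by simp
      have "X (s + Suc ?n) = Q ! Suc ?n" by (rule occ_nth[OF os]) (simp add: lenQ)
      then have B: "X (s + Suc ?n) = c" using q1 by simp
      have "i - 1 = s" "j + 1 = s + Suc ?n" by (simp_all add: i_def j_def)
      then show ?thesis using A B by simp
    qed
    have palin: "\<forall>t. i \<le> t \<longrightarrow> t \<le> j \<longrightarrow> X t = X (i + j - t)"
    proof -
      have "palindrome (fac X i j)" using facP assms(2) by simp
      then show ?thesis using pal_fac[OF ij, of X] by blast
    qed
    define good where "good r \<longleftrightarrow> (\<forall>q\<le>r. X (i - q) = X (j + q))" for r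
    have G: "good r" if "r \<le> i" for r
      using that
    proof (induction r)
      case 0
      have "X i = X (i + j - i)" using palin ij by blast
      then show ?case by (simp add: good_def)
    next
      case (Suc r)
      then have gr: "good r" by simp
      have "X (i - Suc r) = X (j + Suc r)"
      proof (cases "r = 0")
        case True
        then show ?thesis using match by simp
      next
        case False
        show ?thesis
        proof (rule ccontr)
          assume ne: "X (i - Suc r) \<noteq> X (j + Suc r)"
          define i' where "i' = i - r"
          define j' where "j' = j + r"
          have pal': "palindrome (fac X i' j')"
          proof -
            have "i' \<le> j'" using ij by (simp add: i'_def j'_def)
            moreover have "\<forall>t. i' \<le> t \<longrightarrow> t \<le> j' \<longrightarrow> X t = X (i' + j' - t)"
            proof (intro allI impI)
              fix t assume t: "i' \<le> t" "t \<le> j'"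
              have sum: "i' + j' = i + j" using Suc.prems by (simp add: i'_def j'_def)
              consider "t < i" | "i \<le> t \<and> t \<le> j" | "j < t" by linarith
              then show "X t = X (i' + j' - t)"
              proof cases
                case 1
                then have "i - t \<le> r" using t by (simp add: i'_def)
                then have "X (i - (i - t)) = X (j + (i - t))" using gr by (simp add: good_def)
                moreover have "i - (i - t) = t" "j + (i - t) = i' + j' - t" using 1 sum by auto
                ultimately show ?thesis by simp
              next
                case 2
                then show ?thesis using palin sum by simp
              next
                case 3
                then have "t - j \<le> r" using t by (simp add: j'_def)
                then have "X (i - (t - j)) = X (j + (t - j))" using gr by (simp add: good_def)
                moreover have "j + (t - j) = t" "i - (t - j) = i' + j' - t" using 3 sum t Suc.prems
                  by (auto simp: j'_def)
                ultimately show ?thesis by simp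
              qed
            qed
            ultimately show ?thesis using pal_fac by blast
          qed
          have "i' < i \<and> i \<le> j \<and> j < j' \<and> 1 \<le> i' \<and> i + j = i' + j' \<and>
           fac X i j = P \<and> X (i - 1) = X (j + 1) \<and>
           palindrome (fac X i' j') \<and> X (i' - 1) \<noteq> X (j' + 1)"
          proof (intro conjI)
            show "i' < i" using False Suc.prems by (simp add: i'_def)
            show "i \<le> j" by (rule ij)
            show "j < j'" using False by (simp add: j'_def)
            show "1 \<le> i'" using Suc.prems by (simp add: i'_def)
            show "i + j = i' + j'" using Suc.prems by (simp add: i'_def j'_def)
            show "fac X i j = P" by (rule facP)
            show "X (i - 1) = X (j + 1)" by (rule match)
            show "palindrome (fac X i' j')" by (rule pal')
            have "i' - 1 = i - Suc r" "j' + 1 = j + Suc r" by (auto simp: i'_def j'_def)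
            then show "X (i' - 1) \<noteq> X (j' + 1)" using ne by simp
          qed
          then show False using neg by blast
        qed
      qed
      then show ?case using gr by (auto simp: good_def le_Suc_eq)
    qed
    have gi: "good i" using G by simp
    have sumij: "i + j = 2*s + ?n + 1" by (simp add: i_def j_def)
    show ?thesis
    proof (intro allI impI)
      fix t assume t: "t \<le> 2*s + ?n + 1"
      consider "t < i" | "i \<le> t \<and> t \<le> j" | "j < t" by linarith
      then show "X t = X (2*s + ?n + 1 - t)"
      proof cases
        case 1
        have "i - t \<le> i" by simp
        then have "X (i - (i - t)) = X (j + (i - t))" using gi unfolding good_def by blast
        moreover have "i - (i - t) = t" "j + (i - t) = 2*s + ?n + 1 - t" using 1 sumij by auto
        ultimately show ?thesis by simp
      next
        case 2
        then show ?thesis using palin sumij by simp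
      next
        case 3
        then have "t - j \<le> i" using t sumij by simp
        then have "X (i - (t - j)) = X (j + (t - j))" using gi unfolding good_def by blast
        moreover have "j + (t - j) = t" "i - (t - j) = 2*s + ?n + 1 - t" using 3 sumij t by auto
        ultimately show ?thesis by simp
      qed
    qed
  qed
  have shift: "occ X Q (s' + (s' - s)) \<and> (\<forall>t \<le> 2*s + ?n + 1. X (t + 2*(s'-s)) = X t)"
    if ss: "s < s'" "occ X Q s" "occ X Q s'" for s s'
  proof -
    have per: "X (t + 2*(s'-s)) = X t" if t: "t \<le> 2*s + ?n + 1" for t
    proof -
      have "t + 2*(s'-s) \<le> 2*s' + ?n + 1" using t ss by simp
      then have A: "X (t + 2*(s'-s)) = X (2*s' + ?n + 1 - (t + 2*(s'-s)))" using K[OF ss(3)] by blast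
      have e1: "2*s' + ?n + 1 - (t + 2*(s'-s)) = 2*s + ?n + 1 - t" using t ss by simp
      have "2*s + ?n + 1 - t \<le> 2*s + ?n + 1" by simp
      then have B: "X (2*s + ?n + 1 - t) = X (2*s + ?n + 1 - (2*s + ?n + 1 - t))"
        using K[OF ss(2)] by blast
      have e2: "2*s + ?n + 1 - (2*s + ?n + 1 - t) = t" using t by simp
      show ?thesis using A B e1 e2 by metis
    qed
    have "occ X Q (s' + (s' - s))" unfolding occ_def
    proof (intro allI impI)
      fix k assume k: "k < length Q"
      then have "s + k \<le> 2*s + ?n + 1" using lenQ by simp
      then have "X (s + k + 2*(s'-s)) = X (s + k)" by (rule per)
      moreover have "s + k + 2*(s'-s) = s' + (s' - s) + k" using ss by simp
      moreover have "X (s + k) = Q ! k" using occ_nth[OF ss(2) k] .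
      ultimately show "X (s' + (s' - s) + k) = Q ! k" by simp
    qed
    then show ?thesis using per by blast
  qed
  obtain s1 where s1: "occ X Q s1" using fQ is_factor_occ Q_def by auto
  obtain s2 where s2: "s1 < s2" "occ X Q s2" using rec_after[OF st s1] by blast
  define \<delta> where "\<delta> = s2 - s1"
  have dpos: "\<delta> > 0" using s2 by (simp add: \<delta>_def)
  have occk: "occ X Q (s1 + k*\<delta>) \<and> occ X Q (s1 + Suc k * \<delta>)" for k
  proof (induction k)
    case 0
    then show ?case using s1 s2 by (simp add: \<delta>_def)
  next
    case (Suc k)
    have lt: "s1 + k*\<delta> < s1 + Suc k * \<delta>" using dpos by simp
    have "occ X Q ((s1 + Suc k * \<delta>) + ((s1 + Suc k * \<delta>) - (s1 + k*\<delta>)))"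
      using shift[OF lt] Suc.IH by blast
    moreover have "(s1 + Suc k * \<delta>) + ((s1 + Suc k * \<delta>) - (s1 + k*\<delta>)) = s1 + Suc (Suc k) * \<delta>"
      by simp
    ultimately have "occ X Q (s1 + Suc (Suc k) * \<delta>)" by (simp add: ac_simps)
    then show ?case using Suc.IH by blast
  qed
  have perall: "X (t + 2*\<delta>) = X t" for t
  proof -
    have lt: "s1 + t*\<delta> < s1 + Suc t * \<delta>" using dpos by simp
    have "\<forall>t' \<le> 2*(s1 + t*\<delta>) + ?n + 1. X (t' + 2*((s1 + Suc t * \<delta>) - (s1 + t*\<delta>))) = X t'"
      using shift[OF lt] occk[of t] by blast
    moreover have "(s1 + Suc t * \<delta>) - (s1 + t*\<delta>) = \<delta>" by simp
    moreover have "t \<le> 2*(s1 + t*\<delta>) + ?n + 1"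
    proof -
      have "t * 1 \<le> t*\<delta>" using dpos by (intro mult_le_mono2) simp
      then have "t \<le> t*\<delta>" by (simp only: mult_1_right)
      then show ?thesis unfolding distrib_left by linarith
    qed
    ultimately show ?thesis by simp
  qed
  have "eventually_periodic X" unfolding eventually_periodic_def
    using dpos perall by (intro exI[of _ "2*\<delta>"] conjI) auto
  then show False using st by (simp add: sturmian_def)
qed

end
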